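(* Consider a sequence of screening problems indexed by the number of alternatives $k$, with fixed $m$ and $\delta>0$, alternatives labeled so that $\mu_1\ge\dots\ge\mu_k$, and $\mathcal{G}=\{i:\mu_i\ge\mu_m-\delta\}$. Suppose $\limsup_{k\to\infty}|\mathcal{G}|<\infty$. Let a budget allocation algorithm satisfy the two randomization properties below. If the total evaluation budget $B$ satisfies $\lim_{k\to\infty}B/k=0$, then $\limsup_{k\to\infty}\mathrm{PGS}_m=0$.
   Context: A budget allocation algorithm allocates a total of $B$ observations to the $k$ alternatives one at a time (each observation of alternative $i$ is a noisy evaluation with mean $\mu_i$), and when the budget is exhausted outputs a subset $\mathcal{S}$ of $m$ alternatives; $\mathrm{PGS}_m=\Pr\{\mathcal{S}\subseteq\mathcal{G}\}$. Property 1: letting $\mathcal{A}_t$ be the set of alternatives with no observations when the $t$-th observation is allocated, if the algorithm allocates the $t$-th observation to an alternative in $\mathcal{A}_t$, then every alternative in $\mathcal{A}_t$ is selected with equal probability. Property 2: letting $\mathcal{A}$ be the set of alternatives with no observations when the budget is exhausted, if $|\mathcal{A}|\ge m$ and the algorithm chooses its $m$ output alternatives from $\mathcal{A}$, then every $m$-element subset of $\mathcal{A}$ is selected with equal probability. *)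

theory Defs
  imports "HOL-Probability.Probability"
begin

text \<open>Alternatives of the k-th problem are labelled 1..k; observations are numbered 1..B.
  For a run with allocation random variables X (X t = alternative receiving the t-th observation)
  and observation random variables Y (Y t = value of the t-th observation), the history
  sigma-algebra before the t-th allocation is generated by X s, Y s for s < t.\<close>

definition hist_sets :: "'a measure \<Rightarrow> (nat \<Rightarrow> 'a \<Rightarrow> nat) \<Rightarrow> (nat \<Rightarrow> 'a \<Rightarrow> real) \<Rightarrow> nat \<Rightarrow> 'a set set" where
  "hist_sets M X Y t = sets (sigma (space M)
     (\<Union>s\<in>{1..<t}. {X s -` A \<inter> space M | A. True} \<union> {Y s -` A \<inter> space M | A. A \<in> sets borel}))"

definition unobserved :: "nat \<Rightarrow> (nat \<Rightarrow> 'a \<Rightarrow> nat) \<Rightarrow> nat \<Rightarrow> 'a \<Rightarrow> nat set" where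
  "unobserved k X t \<omega> = {1..k} - {X s \<omega> | s. s \<in> {1..<t}}"

definition good_set :: "nat \<Rightarrow> (nat \<Rightarrow> real) \<Rightarrow> nat \<Rightarrow> real \<Rightarrow> nat set" where
  "good_set k mu m \<delta> = {i \<in> {1..k}. mu i \<ge> mu m - \<delta>}"

definition PGS :: "'a measure \<Rightarrow> ('a \<Rightarrow> nat set) \<Rightarrow> nat set \<Rightarrow> real" where
  "PGS M S G = measure M {\<omega> \<in> space M. S \<omega> \<subseteq> G}"

end

theory Submission
  imports Defs
begin

lemma unobs_sa:
  assumes sa: "sigma_algebra \<Omega> \<Sigma>"
    and pre: "\<And>s A. s \<in> {1..<t} \<Longrightarrow> X s -` A \<inter> \<Omega> \<in> \<Sigma>"
  shows "{\<omega>\<in>\<Omega>. Q \<subseteq> unobserved k X t \<omega>} \<in> \<Sigma>"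
proof -
  interpret sigma_algebra \<Omega> \<Sigma> by (rule sa)
  have eq: "{\<omega>\<in>\<Omega>. Q \<subseteq> unobserved k X t \<omega>} =
      (if Q \<subseteq> {1..k} then {\<omega>\<in>\<Omega>. \<forall>s\<in>{1..<t}. X s \<omega> \<in> - Q} else {})"
    unfolding unobserved_def by (auto; blast)
  have "{\<omega>\<in>\<Omega>. \<forall>s\<in>{1..<t}. X s \<omega> \<in> - Q} \<in> \<Sigma>"
  proof (rule sets_Collect_finite_All)
    fix s assume "s \<in> {1..<t}"
    from pre[OF this, of "-Q"] show "{\<omega>\<in>\<Omega>. X s \<omega> \<in> - Q} \<in> \<Sigma>"
      by (simp add: vimage_def Int_def conj_commute)
  qed simp
  then show ?thesis unfolding eq by auto
qed

lemma unobs_hist: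
  "{\<omega>\<in>space M. Q \<subseteq> unobserved k X t \<omega>} \<in> hist_sets M X Y t"
proof -
  let ?G = "(\<Union>s\<in>{1..<t}. {X s -` A \<inter> space M | A. True} \<union> {Y s -` A \<inter> space M | A. A \<in> sets borel})"
  have sub: "?G \<subseteq> Pow (space M)" by auto
  have hs: "hist_sets M X Y t = sigma_sets (space M) ?G"
    unfolding hist_sets_def using sub by (simp add: sets_measure_of)
  show ?thesis unfolding hs
  proof (rule unobs_sa[OF sigma_algebra_sigma_sets[OF sub]])
    fix s A assume "s \<in> {1..<t}"
    then show "X s -` A \<inter> space M \<in> sigma_sets (space M) ?G"
      by (intro sigma_sets.Basic) blast
  qed
qed

lemma unobs_sets:
  assumes "\<And>s. s \<in> {1..<t} \<Longrightarrow> X s \<in> measurable M (count_space UNIV)"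
  shows "{\<omega>\<in>space M. Q \<subseteq> unobserved k X t \<omega>} \<in> sets M"
  by (rule unobs_sa[OF sets.sigma_algebra_axioms]) (auto intro!: measurable_sets assms)

lemma eq_sets:
  assumes "f \<in> measurable M (count_space UNIV)"
  shows "{\<omega>\<in>space M. f \<omega> = a} \<in> sets M"
proof -
  have "{\<omega>\<in>space M. f \<omega> = a} = f -` {a} \<inter> space M" by auto
  then show ?thesis using measurable_sets[OF assms, of "{a}"] by simp
qed

lemma count_lemma:
  assumes "finite_measure M" "A \<in> sets M" "finite J" "\<And>j. j \<in> J \<Longrightarrow> C j \<in> sets M"
    and cnt: "\<And>\<omega>. \<omega> \<in> A \<Longrightarrow> n \<le> card {j\<in>J. \<omega> \<in> C j}"
  shows "real n * measure M A \<le> (\<Sum>j\<in>J. measure M (A \<inter> C j))"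
proof -
  interpret finite_measure M by fact
  have AS: "A \<subseteq> space M" using assms(2) sets.sets_into_space by auto
  have "real n * measure M A = (\<integral>\<omega>. real n * indicator A \<omega> \<partial>M)"
    using AS by (simp add: Int_absorb2)
  also have "\<dots> \<le> (\<integral>\<omega>. (\<Sum>j\<in>J. indicator (A \<inter> C j) \<omega>) \<partial>M)"
  proof (rule integral_mono)
    show "integrable M (\<lambda>\<omega>. real n * indicator A \<omega>)"
      using assms(2) by (intro integrable_mult_right integrable_real_indicator) (simp_all add: less_top[symmetric])
    show "integrable M (\<lambda>\<omega>. \<Sum>j\<in>J. indicator (A \<inter> C j) \<omega> :: real)"
      by (rule Bochner_Integration.integrable_sum, rule integrable_real_indicator) (use assms(2,4) in \<open>auto simp add: less_top[symmetric]\<close>)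
    fix \<omega> assume "\<omega> \<in> space M"
    show "real n * indicator A \<omega> \<le> (\<Sum>j\<in>J. indicator (A \<inter> C j) \<omega>)"
    proof (cases "\<omega> \<in> A")
      case True
      have "(\<Sum>j\<in>J. indicator (A \<inter> C j) \<omega> :: real) = (\<Sum>j\<in>{j\<in>J. \<omega> \<in> C j}. 1)"
        using True assms(3) by (simp add: indicator_def sum.inter_filter[symmetric] if_distrib Int_def conj_commute)
      also have "\<dots> = real (card {j\<in>J. \<omega> \<in> C j})" by simp
      finally show ?thesis using True cnt[OF True] by simp
    next
      case False then show ?thesis by (simp add: sum_nonneg)
    qed
  qed
  also have "\<dots> = (\<Sum>j\<in>J. measure M (A \<inter> C j))"
    using assms(2,4) AS by (subst Bochner_Integration.integral_sum) (auto simp: less_top[symmetric] intro!: sum.cong integrable_real_indicator arg_cong[where f="measure M"])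
  finally show ?thesis .
qed

lemma disj_lemma:
  assumes "prob_space M" "finite J" "\<And>j. j \<in> J \<Longrightarrow> D j \<in> sets M" "disjoint_family_on D J"
  shows "(\<Sum>j\<in>J. measure M (D j)) \<le> 1"
proof -
  interpret prob_space M by fact
  have "(\<Sum>j\<in>J. measure M (D j)) = measure M (\<Union>j\<in>J. D j)"
    using assms by (subst finite_measure_finite_Union) auto
  also have "\<dots> \<le> 1" by simp
  finally show ?thesis .
qed


lemma card_unobs:
  assumes "\<And>s. s \<in> {1..<t} \<Longrightarrow> X s \<omega> \<in> {1..k}"
  shows "k - (t - 1) \<le> card (unobserved k X t \<omega>)"
proof -
  have Ob: "{X s \<omega> | s. s \<in> {1..<t}} = (\<lambda>s. X s \<omega>) ` {1..<t}" by auto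
  have "card ((\<lambda>s. X s \<omega>) ` {1..<t}) \<le> t - 1"
    using card_image_le[of "{1..<t}" "\<lambda>s. X s \<omega>"] by simp
  moreover have "card {1..k} - card ((\<lambda>s. X s \<omega>) ` {1..<t}) \<le> card ({1..k} - (\<lambda>s. X s \<omega>) ` {1..<t})"
    by (rule diff_card_le_card_Diff) simp
  ultimately show ?thesis unfolding unobserved_def Ob by simp
qed

lemma part1:
  fixes M :: "'a measure"
  assumes P: "prob_space M" and t: "t \<in> {1..n}"
    and X_meas: "\<And>t. t \<in> {1..n} \<Longrightarrow> X t \<in> measurable M (count_space UNIV)"
    and X_range: "\<And>t \<omega>. t \<in> {1..n} \<Longrightarrow> \<omega> \<in> space M \<Longrightarrow> X t \<omega> \<in> {1..k}"
    and property1: "\<And>t E a b. t \<in> {1..n} \<Longrightarrow> E \<in> hist_sets M X Y t \<Longrightarrow>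
        E \<subseteq> {\<omega>. a \<in> unobserved k X t \<omega> \<and> b \<in> unobserved k X t \<omega>} \<Longrightarrow>
        measure M (E \<inter> {\<omega>\<in>space M. X t \<omega> = a})
          = measure M (E \<inter> {\<omega>\<in>space M. X t \<omega> = b})"
  shows "real (k - (t - 1)) * measure M {\<omega>\<in>space M. a \<in> unobserved k X t \<omega> \<and> X t \<omega> = a} \<le> 1"
proof -
  interpret prob_space M by fact
  have Xm: "\<And>s. s \<in> {1..<t} \<Longrightarrow> X s \<in> measurable M (count_space UNIV)"
    using t X_meas by auto
  define E where "E b = {\<omega>\<in>space M. {a, b} \<subseteq> unobserved k X t \<omega>}" for b
  have E_sets: "E b \<in> sets M" for b unfolding E_def by (rule unobs_sets[OF Xm])
  have E_hist: "E b \<in> hist_sets M X Y t" for b unfolding E_def by (rule unobs_hist)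
  have Xt_sets: "{\<omega>\<in>space M. X t \<omega> = b} \<in> sets M" for b by (rule eq_sets[OF X_meas[OF t]])
  define A where "A = {\<omega>\<in>space M. a \<in> unobserved k X t \<omega> \<and> X t \<omega> = a}"
  have A_eq: "A = E a \<inter> {\<omega>\<in>space M. X t \<omega> = a}" unfolding A_def E_def by auto
  define C where "C b = {\<omega>\<in>space M. {b} \<subseteq> unobserved k X t \<omega>}" for b
  have C_sets: "C b \<in> sets M" for b unfolding C_def by (rule unobs_sets[OF Xm])
  have "real (k - (t - 1)) * measure M A \<le> (\<Sum>b\<in>{1..k}. measure M (A \<inter> C b))"
  proof (rule count_lemma)
    show "finite_measure M" by unfold_locales
    show "A \<in> sets M" unfolding A_eq using E_sets Xt_sets by auto
    fix \<omega> assume "\<omega> \<in> A"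
    then have om: "\<omega> \<in> space M" unfolding A_def by auto
    have "{b \<in> {1..k}. \<omega> \<in> C b} = unobserved k X t \<omega>"
      using om unfolding C_def unobserved_def by auto
    moreover have "k - (t - 1) \<le> card (unobserved k X t \<omega>)"
      by (rule card_unobs) (use X_range om t in auto)
    ultimately show "k - (t - 1) \<le> card {b \<in> {1..k}. \<omega> \<in> C b}" by simp
  qed (auto intro: C_sets)
  also have "\<dots> = (\<Sum>b\<in>{1..k}. measure M (E b \<inter> {\<omega>\<in>space M. X t \<omega> = b}))"
  proof (rule sum.cong)
    fix b assume "b \<in> {1..k}"
    have "A \<inter> C b = E b \<inter> {\<omega>\<in>space M. X t \<omega> = a}"
      unfolding A_def C_def E_def by auto
    then show "measure M (A \<inter> C b) = measure M (E b \<inter> {\<omega>\<in>space M. X t \<omega> = b})"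
      using property1[OF t E_hist[of b], of a b] unfolding E_def by auto
  qed simp
  also have "\<dots> \<le> 1"
  proof (rule disj_lemma)
    show "disjoint_family_on (\<lambda>b. E b \<inter> {\<omega>\<in>space M. X t \<omega> = b}) {1..k}"
      unfolding disjoint_family_on_def by auto
  qed (use P E_sets Xt_sets in auto)
  finally show ?thesis unfolding A_def .
qed


lemma blk_div:
  assumes "m \<ge> (1::nat)" "x \<in> {j*m+1..j*m+m}"
  shows "(x - 1) div m = j"
proof -
  from assms have e: "x - 1 = (x - 1 - j*m) + j*m" and l: "x - 1 - j*m < m" by auto
  have "(x - 1) div m = ((x - 1 - j*m) + j*m) div m" using e by simp
  also have "\<dots> = (x - 1 - j*m) div m + j" using assms(1) by simp
  also have "\<dots> = j" using l by simp
  finally show ?thesis .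
qed

lemma part2:
  fixes M :: "'a measure"
  assumes P: "prob_space M" and m: "m \<ge> 1" and T: "card T = m"
    and X_meas: "\<And>t. t \<in> {1..n} \<Longrightarrow> X t \<in> measurable M (count_space UNIV)"
    and X_range: "\<And>t \<omega>. t \<in> {1..n} \<Longrightarrow> \<omega> \<in> space M \<Longrightarrow> X t \<omega> \<in> {1..k}"
    and S_meas: "S \<in> measurable M (count_space UNIV)"
    and property2: "\<And>E T T'. E \<in> hist_sets M X Y (n + 1) \<Longrightarrow>
        card T = m \<Longrightarrow> card T' = m \<Longrightarrow>
        E \<subseteq> {\<omega>. T \<subseteq> unobserved k X (n + 1) \<omega> \<and> T' \<subseteq> unobserved k X (n + 1) \<omega>} \<Longrightarrow>
        measure M (E \<inter> {\<omega>\<in>space M. S \<omega> = T})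
          = measure M (E \<inter> {\<omega>\<in>space M. S \<omega> = T'})"
  shows "real (k div m - n) * measure M {\<omega>\<in>space M. T \<subseteq> unobserved k X (n+1) \<omega> \<and> S \<omega> = T} \<le> 1"
proof -
  interpret prob_space M by fact
  let ?N = "k div m"
  let ?U = "unobserved k X (n+1)"
  define I where "I j = {j*m+1..j*m+m}" for j
  have I_card: "card (I j) = m" for j unfolding I_def by simp
  have I_sub: "I j \<subseteq> {1..k}" if "j < ?N" for j
  proof -
    have "Suc j * m \<le> ?N * m" using that by (intro mult_le_mono1) simp
    also have "\<dots> \<le> k" by simp
    finally show ?thesis unfolding I_def by auto
  qed
  have I_inj: "I j \<noteq> I j'" if "j \<noteq> j'" for j j'
  proof
    assume "I j = I j'"
    have "j*m+1 \<in> I j" unfolding I_def using m by auto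
    then have "j*m+1 \<in> I j'" using \<open>I j = I j'\<close> by simp
    then have "(j*m+1 - 1) div m = j'" unfolding I_def by (rule blk_div[OF m])
    then show False using that m by simp
  qed
  have Xm: "\<And>s. s \<in> {1..<n+1} \<Longrightarrow> X s \<in> measurable M (count_space UNIV)"
    using X_meas by auto
  define E where "E j = {\<omega>\<in>space M. T \<union> I j \<subseteq> ?U \<omega>}" for j
  have E_sets: "E j \<in> sets M" for j unfolding E_def by (rule unobs_sets[OF Xm])
  have E_hist: "E j \<in> hist_sets M X Y (n+1)" for j unfolding E_def by (rule unobs_hist)
  have S_sets: "{\<omega>\<in>space M. S \<omega> = T'} \<in> sets M" for T' by (rule eq_sets[OF S_meas])
  define A where "A = {\<omega>\<in>space M. T \<subseteq> ?U \<omega> \<and> S \<omega> = T}"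
  define C where "C j = {\<omega>\<in>space M. I j \<subseteq> ?U \<omega>}" for j
  have A_sets: "A \<in> sets M"
  proof -
    have "A = {\<omega>\<in>space M. T \<subseteq> ?U \<omega>} \<inter> {\<omega>\<in>space M. S \<omega> = T}" unfolding A_def by auto
    then show ?thesis using unobs_sets[OF Xm] S_sets by auto
  qed
  have C_sets: "C j \<in> sets M" for j unfolding C_def by (rule unobs_sets[OF Xm])
  have "real (?N - n) * measure M A \<le> (\<Sum>j\<in>{..<?N}. measure M (A \<inter> C j))"
  proof (rule count_lemma)
    show "finite_measure M" by unfold_locales
    fix \<omega> assume "\<omega> \<in> A"
    then have om: "\<omega> \<in> space M" unfolding A_def by auto
    define Ob where "Ob = {X s \<omega> | s. s \<in> {1..<n+1}}"
    have Ob_eq: "Ob = (\<lambda>s. X s \<omega>) ` {1..<n+1}" unfolding Ob_def by auto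
    have Ob_card: "card Ob \<le> n" unfolding Ob_eq using card_image_le[of "{1..<n+1}" "\<lambda>s. X s \<omega>"] by simp
    have bad: "{j\<in>{..<?N}. \<omega> \<notin> C j} \<subseteq> (\<lambda>x. (x - 1) div m) ` Ob"
    proof
      fix j assume j: "j \<in> {j\<in>{..<?N}. \<omega> \<notin> C j}"
      then have "\<not> I j \<subseteq> ?U \<omega>" using om unfolding C_def by auto
      then obtain x where x: "x \<in> I j" "x \<notin> ?U \<omega>" by auto
      have "x \<in> {1..k}" using x(1) I_sub[of j] j by auto
      then have "x \<in> Ob" using x(2) unfolding unobserved_def Ob_def by auto
      moreover have "(x - 1) div m = j" using x(1) blk_div[OF m] unfolding I_def by auto
      ultimately show "j \<in> (\<lambda>x. (x - 1) div m) ` Ob" by force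
    qed
    have fOb: "finite Ob" unfolding Ob_eq by simp
    have "card {j\<in>{..<?N}. \<omega> \<notin> C j} \<le> n"
      using card_mono[OF finite_imageI[OF fOb] bad] card_image_le[OF fOb, of "\<lambda>x. (x - 1) div m"] Ob_card
      by linarith
    moreover have "card {j\<in>{..<?N}. \<omega> \<in> C j} + card {j\<in>{..<?N}. \<omega> \<notin> C j} = ?N"
    proof -
      have "card {j\<in>{..<?N}. \<omega> \<in> C j} + card {j\<in>{..<?N}. \<omega> \<notin> C j} = card ({j\<in>{..<?N}. \<omega> \<in> C j} \<union> {j\<in>{..<?N}. \<omega> \<notin> C j})"
        by (rule card_Un_disjoint[symmetric]) auto
      also have "{j\<in>{..<?N}. \<omega> \<in> C j} \<union> {j\<in>{..<?N}. \<omega> \<notin> C j} = {..<?N}" by auto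
      finally show ?thesis by simp
    qed
    ultimately show "?N - n \<le> card {j\<in>{..<?N}. \<omega> \<in> C j}" by linarith
  qed (auto intro: C_sets A_sets)
  also have "\<dots> = (\<Sum>j\<in>{..<?N}. measure M (E j \<inter> {\<omega>\<in>space M. S \<omega> = I j}))"
  proof (rule sum.cong)
    fix j assume "j \<in> {..<?N}"
    have "A \<inter> C j = E j \<inter> {\<omega>\<in>space M. S \<omega> = T}"
      unfolding A_def C_def E_def by auto
    then show "measure M (A \<inter> C j) = measure M (E j \<inter> {\<omega>\<in>space M. S \<omega> = I j})"
      using property2[OF E_hist[of j] T I_card[of j]] unfolding E_def by auto
  qed simp
  also have "\<dots> \<le> 1"
  proof (rule disj_lemma)
    show "disjoint_family_on (\<lambda>j. E j \<inter> {\<omega>\<in>space M. S \<omega> = I j}) {..<?N}"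
      unfolding disjoint_family_on_def using I_inj by auto
  qed (use P E_sets S_sets in auto)
  finally show ?thesis unfolding A_def .
qed


lemma core:
  fixes M :: "'a measure"
  assumes P: "prob_space M" and m: "m \<ge> 1"
    and X_meas: "\<And>t. t \<in> {1..n} \<Longrightarrow> X t \<in> measurable M (count_space UNIV)"
    and X_range: "\<And>t \<omega>. t \<in> {1..n} \<Longrightarrow> \<omega> \<in> space M \<Longrightarrow> X t \<omega> \<in> {1..k}"
    and S_meas: "S \<in> measurable M (count_space UNIV)"
    and S_range: "\<And>\<omega>. \<omega> \<in> space M \<Longrightarrow> card (S \<omega>) = m"
    and property1: "\<And>t E a b. t \<in> {1..n} \<Longrightarrow> E \<in> hist_sets M X Y t \<Longrightarrow>
        E \<subseteq> {\<omega>. a \<in> unobserved k X t \<omega> \<and> b \<in> unobserved k X t \<omega>} \<Longrightarrow>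
        measure M (E \<inter> {\<omega>\<in>space M. X t \<omega> = a})
          = measure M (E \<inter> {\<omega>\<in>space M. X t \<omega> = b})"
    and property2: "\<And>E T T'. E \<in> hist_sets M X Y (n + 1) \<Longrightarrow>
        card T = m \<Longrightarrow> card T' = m \<Longrightarrow>
        E \<subseteq> {\<omega>. T \<subseteq> unobserved k X (n + 1) \<omega> \<and> T' \<subseteq> unobserved k X (n + 1) \<omega>} \<Longrightarrow>
        measure M (E \<inter> {\<omega>\<in>space M. S \<omega> = T})
          = measure M (E \<inter> {\<omega>\<in>space M. S \<omega> = T'})"
    and G: "G \<subseteq> {1..k}"
    and k1: "2 * n \<le> k" and k2: "4 * m * n \<le> k" and k3: "2 * m \<le> k"
  shows "PGS M S G \<le> 2 * real (card G) * real n / real k + 2 ^ card G * 4 * real m / real k"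
proof -
  interpret prob_space M by fact
  have kpos: "real k > 0" using k3 m by simp
  have fG: "finite G" using G finite_subset by blast
  define A1 where "A1 a t = {\<omega>\<in>space M. a \<in> unobserved k X t \<omega> \<and> X t \<omega> = a}" for a t
  define A2 where "A2 T = {\<omega>\<in>space M. T \<subseteq> unobserved k X (n+1) \<omega> \<and> S \<omega> = T}" for T
  define \<T> where "\<T> = {T. T \<subseteq> G \<and> card T = m}"
  have fT: "finite \<T>" unfolding \<T>_def using fG by (auto intro: finite_subset[of _ "Pow G"])
  have cT: "card \<T> \<le> 2 ^ card G"
  proof -
    have "card \<T> \<le> card (Pow G)" unfolding \<T>_def using fG by (intro card_mono) auto
    then show ?thesis using card_Pow[of G] fG by simp
  qed
  have A1_sets: "A1 a t \<in> sets M" if "t \<in> {1..n}" for a t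
  proof -
    have "A1 a t = {\<omega>\<in>space M. {a} \<subseteq> unobserved k X t \<omega>} \<inter> {\<omega>\<in>space M. X t \<omega> = a}"
      unfolding A1_def by auto
    moreover have "{\<omega>\<in>space M. {a} \<subseteq> unobserved k X t \<omega>} \<in> sets M"
      by (rule unobs_sets) (use X_meas that in auto)
    ultimately show ?thesis using eq_sets[OF X_meas[OF that]] by auto
  qed
  have A2_sets: "A2 T \<in> sets M" for T
  proof -
    have "A2 T = {\<omega>\<in>space M. T \<subseteq> unobserved k X (n+1) \<omega>} \<inter> {\<omega>\<in>space M. S \<omega> = T}"
      unfolding A2_def by auto
    moreover have "{\<omega>\<in>space M. T \<subseteq> unobserved k X (n+1) \<omega>} \<in> sets M"
      by (rule unobs_sets) (use X_meas in auto)
    ultimately show ?thesis using eq_sets[OF S_meas] by auto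
  qed
  let ?F1 = "\<Union>a\<in>G. \<Union>t\<in>{1..n}. A1 a t"
  let ?F2 = "\<Union>T\<in>\<T>. A2 T"
  have sub: "{\<omega>\<in>space M. S \<omega> \<subseteq> G} \<subseteq> ?F1 \<union> ?F2"
  proof
    fix \<omega> assume "\<omega> \<in> {\<omega>\<in>space M. S \<omega> \<subseteq> G}"
    then have om: "\<omega> \<in> space M" and SG: "S \<omega> \<subseteq> G" by auto
    show "\<omega> \<in> ?F1 \<union> ?F2"
    proof (cases "S \<omega> \<subseteq> unobserved k X (n+1) \<omega>")
      case True
      then have "\<omega> \<in> A2 (S \<omega>)" unfolding A2_def using om by auto
      moreover have "S \<omega> \<in> \<T>" unfolding \<T>_def using SG S_range[OF om] by auto
      ultimately show ?thesis by blast
    next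
      case False
      then obtain a where a: "a \<in> S \<omega>" "a \<notin> unobserved k X (n+1) \<omega>" by auto
      have aG: "a \<in> G" using a SG by auto
      then have "a \<in> {1..k}" using G by auto
      then have ex: "\<exists>s. s \<in> {1..n} \<and> X s \<omega> = a" using a(2) unfolding unobserved_def by auto
      define s where "s = (LEAST s. s \<in> {1..n} \<and> X s \<omega> = a)"
      have s: "s \<in> {1..n} \<and> X s \<omega> = a" unfolding s_def using LeastI_ex[OF ex] .
      have smin: "\<not> (s' \<in> {1..n} \<and> X s' \<omega> = a)" if "s' < s" for s'
        using not_less_Least[OF that[unfolded s_def]] .
      have sm2: "X s' \<omega> \<noteq> a" if "s' \<in> {1..<s}" for s'
        using smin[of s'] that s by auto
      have "a \<in> unobserved k X s \<omega>"
        using \<open>a \<in> {1..k}\<close> sm2 unfolding unobserved_def by blast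
      then have "\<omega> \<in> A1 a s" unfolding A1_def using om s by auto
      then show ?thesis using aG s by blast
    qed
  qed
  have "PGS M S G \<le> measure M (?F1 \<union> ?F2)"
    unfolding PGS_def using sub A1_sets A2_sets fT fG
    by (intro finite_measure_mono sets.Un sets.finite_UN) auto
  also have "\<dots> \<le> measure M ?F1 + measure M ?F2"
    using A1_sets A2_sets fT fG by (intro measure_Un_le) auto
  also have "measure M ?F1 \<le> (\<Sum>a\<in>G. measure M (\<Union>t\<in>{1..n}. A1 a t))"
    using A1_sets fG by (intro measure_UNION_le) auto
  also have "\<dots> \<le> (\<Sum>a\<in>G. \<Sum>t\<in>{1..n}. measure M (A1 a t))"
    using A1_sets by (intro sum_mono measure_UNION_le) auto
  also have "\<dots> \<le> (\<Sum>a\<in>G. \<Sum>t\<in>{1..n}. 2 / real k)"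
  proof (intro sum_mono)
    fix a t assume t: "t \<in> {1..n}"
    have h: "real (k - (t - 1)) * measure M (A1 a t) \<le> 1"
      unfolding A1_def by (rule part1[OF P t X_meas X_range property1]) auto
    have "real k / 2 \<le> real (k - (t - 1))" using t k1 by auto
    then have "real k / 2 * measure M (A1 a t) \<le> 1"
      using h mult_right_mono[OF _ measure_nonneg] order_trans by blast
    then show "measure M (A1 a t) \<le> 2 / real k" using kpos by (simp add: field_simps)
  qed
  also have "\<dots> = 2 * real (card G) * real n / real k" by simp
  also have "measure M ?F2 \<le> (\<Sum>T\<in>\<T>. measure M (A2 T))"
    using A2_sets fT by (intro measure_UNION_le) auto
  also have "\<dots> \<le> (\<Sum>T\<in>\<T>. 4 * real m / real k)"
  proof (intro sum_mono)
    fix T assume "T \<in> \<T>"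
    then have T: "card T = m" unfolding \<T>_def by auto
    have h: "real (k div m - n) * measure M (A2 T) \<le> 1"
      unfolding A2_def by (rule part2[OF P m T X_meas X_range S_meas property2]) auto
    have mm: "k mod m < m" using m by simp
    have kdn: "k < (k div m) * m + m" using div_mult_mod_eq[of k m] mm by linarith
    have kd: "real k < real (k div m) * real m + real m"
      using kdn by (metis of_nat_add of_nat_less_iff of_nat_mult)
    have k2r: "4 * (real m * real n) \<le> real k" using k2 by (metis mult.assoc of_nat_le_iff of_nat_mult of_nat_numeral)
    have k3r: "2 * real m \<le> real k" using k3 by (metis of_nat_le_iff of_nat_mult of_nat_numeral)
    have key: "real k \<le> 4 * (real m * real (k div m)) - 4 * (real m * real n)"
      using kd k2r k3r by (simp add: algebra_simps)
    have nle: "n \<le> k div m"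
    proof -
      have "n * m \<le> 4 * m * n" by simp
      then have "n * m \<le> k" using k2 by linarith
      then have "(n * m) div m \<le> k div m" by (rule div_le_mono)
      then show ?thesis using m by simp
    qed
    have "real k / (4 * real m) \<le> real (k div m - n)"
      using key nle m by (simp add: field_simps of_nat_diff)
    then have "real k / (4 * real m) * measure M (A2 T) \<le> 1"
      using h mult_right_mono[OF _ measure_nonneg] order_trans by blast
    then show "measure M (A2 T) \<le> 4 * real m / real k" using kpos m by (simp add: field_simps)
  qed
  also have "\<dots> = real (card \<T>) * (4 * real m / real k)" by simp
  also have "\<dots> \<le> 2 ^ card G * (4 * real m / real k)"
  proof (rule mult_right_mono)
    show "real (card \<T>) \<le> 2 ^ card G" using cT by (metis of_nat_le_iff of_nat_numeral of_nat_power)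
  qed (use kpos in simp)
  finally show ?thesis by simp
qed

theorem mainTheorem6:
  fixes m :: nat and \<delta> :: real
    and mu :: "nat \<Rightarrow> nat \<Rightarrow> real"      \<comment> \<open>mu k i = mean of alternative i in problem k\<close>
    and B :: "nat \<Rightarrow> nat"                 \<comment> \<open>budget of problem k\<close>
    and M :: "nat \<Rightarrow> 'a measure"           \<comment> \<open>probability space of problem k\<close>
    and X :: "nat \<Rightarrow> nat \<Rightarrow> 'a \<Rightarrow> nat"     \<comment> \<open>X k t = alternative receiving the t-th observation\<close>
    and Y :: "nat \<Rightarrow> nat \<Rightarrow> 'a \<Rightarrow> real"    \<comment> \<open>Y k t = value of the t-th observation\<close>
    and S :: "nat \<Rightarrow> 'a \<Rightarrow> nat set"       \<comment> \<open>S k = selected subset\<close>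
  assumes m_pos: "m \<ge> 1"
    and delta_pos: "\<delta> > 0"
    and sorted: "\<And>k i j. k \<ge> m \<Longrightarrow> 1 \<le> i \<Longrightarrow> i \<le> j \<Longrightarrow> j \<le> k \<Longrightarrow> mu k j \<le> mu k i"
    and prob: "\<And>k. k \<ge> m \<Longrightarrow> prob_space (M k)"
    and X_meas: "\<And>k t. k \<ge> m \<Longrightarrow> t \<in> {1..B k} \<Longrightarrow> X k t \<in> measurable (M k) (count_space UNIV)"
    and X_range: "\<And>k t \<omega>. k \<ge> m \<Longrightarrow> t \<in> {1..B k} \<Longrightarrow> \<omega> \<in> space (M k) \<Longrightarrow> X k t \<omega> \<in> {1..k}"
    and Y_int: "\<And>k t. k \<ge> m \<Longrightarrow> t \<in> {1..B k} \<Longrightarrow> integrable (M k) (Y k t)"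
    and Y_mean: "\<And>k t i E. k \<ge> m \<Longrightarrow> t \<in> {1..B k} \<Longrightarrow> E \<in> hist_sets (M k) (X k) (Y k) t \<Longrightarrow>
        (\<integral>\<omega>. indicator (E \<inter> {\<omega>\<in>space (M k). X k t \<omega> = i}) \<omega> * Y k t \<omega> \<partial>M k)
          = mu k i * measure (M k) (E \<inter> {\<omega>\<in>space (M k). X k t \<omega> = i})"
    and S_meas: "\<And>k. k \<ge> m \<Longrightarrow> S k \<in> measurable (M k) (count_space UNIV)"
    and S_range: "\<And>k \<omega>. k \<ge> m \<Longrightarrow> \<omega> \<in> space (M k) \<Longrightarrow> S k \<omega> \<subseteq> {1..k} \<and> card (S k \<omega>) = m"
    and property1: "\<And>k t E a b. k \<ge> m \<Longrightarrow> t \<in> {1..B k} \<Longrightarrow> E \<in> hist_sets (M k) (X k) (Y k) t \<Longrightarrow>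
        E \<subseteq> {\<omega>. a \<in> unobserved k (X k) t \<omega> \<and> b \<in> unobserved k (X k) t \<omega>} \<Longrightarrow>
        measure (M k) (E \<inter> {\<omega>\<in>space (M k). X k t \<omega> = a})
          = measure (M k) (E \<inter> {\<omega>\<in>space (M k). X k t \<omega> = b})"
    and property2: "\<And>k E T T'. k \<ge> m \<Longrightarrow> E \<in> hist_sets (M k) (X k) (Y k) (B k + 1) \<Longrightarrow>
        card T = m \<Longrightarrow> card T' = m \<Longrightarrow>
        E \<subseteq> {\<omega>. T \<subseteq> unobserved k (X k) (B k + 1) \<omega> \<and> T' \<subseteq> unobserved k (X k) (B k + 1) \<omega>} \<Longrightarrow>
        measure (M k) (E \<inter> {\<omega>\<in>space (M k). S k \<omega> = T})
          = measure (M k) (E \<inter> {\<omega>\<in>space (M k). S k \<omega> = T'})"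
    and G_bounded: "limsup (\<lambda>k. ereal (real (card (good_set k (mu k) m \<delta>)))) < \<infinity>"
    and budget: "(\<lambda>k. real (B k) / real k) \<longlonglongrightarrow> 0"
  shows "limsup (\<lambda>k. ereal (PGS (M k) (S k) (good_set k (mu k) m \<delta>))) = 0"
proof -
  obtain c :: nat where c: "limsup (\<lambda>k. ereal (real (card (good_set k (mu k) m \<delta>)))) < ereal (real c)"
    using G_bounded less_PInf_Ex_of_nat by auto
  have ev_c: "eventually (\<lambda>k. card (good_set k (mu k) m \<delta>) \<le> c) sequentially"
    using Limsup_lessD[OF c] by eventually_elim simp
  have mpos: "(0::real) < 1 / (4 * real m)" using m_pos by simp
  have ev_B: "eventually (\<lambda>k. real (B k) / real k < 1 / (4 * real m)) sequentially"
    using order_tendstoD(2)[OF budget mpos] .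
  define up where "up k = 2 * real c * (real (B k) / real k) + 2 ^ c * 4 * real m / real k" for k
  have ev_up: "eventually (\<lambda>k. PGS (M k) (S k) (good_set k (mu k) m \<delta>) \<le> up k) sequentially"
    using ev_c ev_B eventually_ge_at_top[of "2 * m"]
  proof eventually_elim
    case (elim k)
    have km: "k \<ge> m" using elim(3) by simp
    have kpos: "real k > 0" using elim(3) m_pos by simp
    have B4: "4 * m * B k \<le> k"
    proof -
      have "real (B k) < real k / (4 * real m)" using elim(2) kpos m_pos
        by (simp add: field_simps)
      then have "4 * real m * real (B k) < real k" using m_pos by (simp add: field_simps)
      then show ?thesis by (metis less_imp_le of_nat_less_iff of_nat_mult of_nat_numeral)
    qed
    have B2: "2 * B k \<le> k"
    proof -
      have "2 * B k \<le> 4 * m * B k" using m_pos by simp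
      then show ?thesis using B4 by linarith
    qed
    let ?G = "good_set k (mu k) m \<delta>"
    have "PGS (M k) (S k) ?G \<le> 2 * real (card ?G) * real (B k) / real k + 2 ^ card ?G * 4 * real m / real k"
    proof (rule core[where Y="Y k" and X="X k" and S="S k" and n="B k" and k=k and M="M k"])
      show "prob_space (M k)" using prob km .
      show "1 \<le> m" by (rule m_pos)
      show "?G \<subseteq> {1..k}" unfolding good_set_def by auto
      show "\<And>t. t \<in> {1..B k} \<Longrightarrow> X k t \<in> measurable (M k) (count_space UNIV)"
        using X_meas[OF km] .
      show "\<And>t \<omega>. t \<in> {1..B k} \<Longrightarrow> \<omega> \<in> space (M k) \<Longrightarrow> X k t \<omega> \<in> {1..k}"
        using X_range[OF km] .
      show "S k \<in> measurable (M k) (count_space UNIV)" using S_meas[OF km] .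
      show "\<And>\<omega>. \<omega> \<in> space (M k) \<Longrightarrow> card (S k \<omega>) = m" using S_range[OF km] by blast
      show "\<And>t E a b. t \<in> {1..B k} \<Longrightarrow> E \<in> hist_sets (M k) (X k) (Y k) t \<Longrightarrow>
        E \<subseteq> {\<omega>. a \<in> unobserved k (X k) t \<omega> \<and> b \<in> unobserved k (X k) t \<omega>} \<Longrightarrow>
        measure (M k) (E \<inter> {\<omega>\<in>space (M k). X k t \<omega> = a})
          = measure (M k) (E \<inter> {\<omega>\<in>space (M k). X k t \<omega> = b})"
        using property1[OF km] .
      show "\<And>E T T'. E \<in> hist_sets (M k) (X k) (Y k) (B k + 1) \<Longrightarrow>
        card T = m \<Longrightarrow> card T' = m \<Longrightarrow>
        E \<subseteq> {\<omega>. T \<subseteq> unobserved k (X k) (B k + 1) \<omega> \<and> T' \<subseteq> unobserved k (X k) (B k + 1) \<omega>} \<Longrightarrow>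
        measure (M k) (E \<inter> {\<omega>\<in>space (M k). S k \<omega> = T})
          = measure (M k) (E \<inter> {\<omega>\<in>space (M k). S k \<omega> = T'})"
        using property2[OF km] .
    qed (use B2 B4 elim(3) in auto)
    also have "\<dots> \<le> up k"
    proof -
      have g: "real (card ?G) \<le> real c" using elim(1) by simp
      have "2 * real (card ?G) * real (B k) / real k \<le> 2 * real c * (real (B k) / real k)"
        using g kpos by (simp add: divide_right_mono mult_right_mono)
      moreover have "(2::real) ^ card ?G \<le> 2 ^ c" using elim(1) by (rule power_increasing) simp
      then have "2 ^ card ?G * 4 * real m / real k \<le> 2 ^ c * 4 * real m / real k"
        using kpos by (intro divide_right_mono mult_right_mono) auto
      ultimately show ?thesis unfolding up_def by linarith
    qed
    finally show ?case .
  qed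
  have up_lim: "up \<longlonglongrightarrow> 0"
  proof -
    have "(\<lambda>k. 2 * real c * (real (B k) / real k) + 2 ^ c * 4 * real m / real k) \<longlonglongrightarrow> 2 * real c * 0 + 0"
      by (intro tendsto_add tendsto_mult_left budget lim_const_over_n)
    then show ?thesis unfolding up_def by simp
  qed
  have lim: "(\<lambda>k. PGS (M k) (S k) (good_set k (mu k) m \<delta>)) \<longlonglongrightarrow> 0"
  proof (rule tendsto_sandwich[OF _ ev_up tendsto_const up_lim])
    show "eventually (\<lambda>k. 0 \<le> PGS (M k) (S k) (good_set k (mu k) m \<delta>)) sequentially"
      by (simp add: PGS_def)
  qed
  then have "(\<lambda>k. ereal (PGS (M k) (S k) (good_set k (mu k) m \<delta>))) \<longlonglongrightarrow> ereal 0"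
    by simp
  then show ?thesis by (simp add: lim_imp_Limsup zero_ereal_def)
qed

end
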